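(* Let $n<\infty$ be a positive integer and let $\mathcal{F}$ be a family of (finite) metric spaces each of cardinality at most $n$. Then for all $X,Y\in\mathcal{F}$, $$\widehat{d}_{\mathrm{GH}}(X,Y)\le d_{\mathrm{GH}}(X,Y)\le (2n-1)\,\widehat{d}_{\mathrm{GH}}(X,Y),$$ i.e. the Gromov--Hausdorff distance and the modified Gromov--Hausdorff distance are Lipschitz-equivalent on $\mathcal{F}$ with Lipschitz constant at most $2n-1$.
   Context: For a map $f:X\to Y$ between metric spaces, its distortion is $\operatorname{dis}(f)=\sup_{x,x'\in X}|d_X(x,x')-d_Y(f(x),f(x'))|$. For $f:X\to Y$, $g:Y\to X$, the codistortion is $\operatorname{codis}(f,g)=\sup_{x\in X,y\in Y}|d_X(x,g(y))-d_Y(f(x),y)|$. For compact metric spaces $X,Y$, the Gromov--Hausdorff distance $d_{\mathrm{GH}}(X,Y)$ is the infimum, over metric spaces $Z$ and isometric embeddings of $X$ and $Y$ into $Z$, of the Hausdorff distance in $Z$ between the images; equivalently $d_{\mathrm{GH}}(X,Y)=\frac12\inf_{f:X\to Y,\,g:Y\to X}\max\{\operatorname{dis}(f),\operatorname{dis}(g),\operatorname{codis}(f,g)\}$. The modified Gromov--Hausdorff distance is $\widehat{d}_{\mathrm{GH}}(X,Y)=\frac12\max\{\inf_{f:X\to Y}\operatorname{dis}(f),\inf_{g:Y\to X}\operatorname{dis}(g)\}$. *)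

theory Defs
  imports "HOL-Analysis.Analysis"
begin

definition dis :: "'a set \<Rightarrow> ('a \<Rightarrow> 'a \<Rightarrow> real) \<Rightarrow> ('b \<Rightarrow> 'b \<Rightarrow> real) \<Rightarrow> ('a \<Rightarrow> 'b) \<Rightarrow> real" where
  "dis X dX dY f = (SUP p \<in> X \<times> X. \<bar>dX (fst p) (snd p) - dY (f (fst p)) (f (snd p))\<bar>)"

definition codis :: "'a set \<Rightarrow> ('a \<Rightarrow> 'a \<Rightarrow> real) \<Rightarrow> 'b set \<Rightarrow> ('b \<Rightarrow> 'b \<Rightarrow> real)
    \<Rightarrow> ('a \<Rightarrow> 'b) \<Rightarrow> ('b \<Rightarrow> 'a) \<Rightarrow> real" where
  "codis X dX Y dY f g = (SUP p \<in> X \<times> Y. \<bar>dX (fst p) (g (snd p)) - dY (f (fst p)) (snd p)\<bar>)"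

text \<open>Gromov--Hausdorff distance via the distortion/codistortion formula
  (maps are taken extensional, i.e. only their values on the carrier matter).\<close>

definition dGH :: "'a set \<Rightarrow> ('a \<Rightarrow> 'a \<Rightarrow> real) \<Rightarrow> 'b set \<Rightarrow> ('b \<Rightarrow> 'b \<Rightarrow> real) \<Rightarrow> real" where
  "dGH X dX Y dY = (1/2) * (INF fg \<in> (X \<rightarrow>\<^sub>E Y) \<times> (Y \<rightarrow>\<^sub>E X).
      max (dis X dX dY (fst fg)) (max (dis Y dY dX (snd fg)) (codis X dX Y dY (fst fg) (snd fg))))"

definition mdGH :: "'a set \<Rightarrow> ('a \<Rightarrow> 'a \<Rightarrow> real) \<Rightarrow> 'b set \<Rightarrow> ('b \<Rightarrow> 'b \<Rightarrow> real) \<Rightarrow> real" where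
  "mdGH X dX Y dY = (1/2) * max (INF f \<in> (X \<rightarrow>\<^sub>E Y). dis X dX dY f) (INF g \<in> (Y \<rightarrow>\<^sub>E X). dis Y dY dX g)"

end

theory Submission
  imports Defs
begin

lemma dis_pointwise:
  assumes "finite X" "x \<in> X" "x' \<in> X"
  shows "\<bar>dX x x' - dY (f x) (f x')\<bar> \<le> dis X dX dY f"
proof -
  have "(x, x') \<in> X \<times> X" using assms by auto
  then show ?thesis unfolding dis_def
    using cSUP_upper[of "(x,x')" "X \<times> X" "\<lambda>p. \<bar>dX (fst p) (snd p) - dY (f (fst p)) (f (snd p))\<bar>"]
      bdd_above_finite assms(1) by (simp add: finite_imageI)
qed

lemma dis_nonneg:
  assumes "finite X" "X \<noteq> {}"
  shows "0 \<le> dis X dX dY f"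
proof -
  obtain x where "x \<in> X" using assms by auto
  then show ?thesis using dis_pointwise[OF assms(1) \<open>x\<in>X\<close> \<open>x\<in>X\<close>, of dX dY f] by linarith
qed

lemma exists_min:
  fixes F :: "'c \<Rightarrow> real"
  assumes "finite S" "S \<noteq> {}"
  obtains s where "s \<in> S" "\<And>t. t \<in> S \<Longrightarrow> F s \<le> F t"
proof -
  obtain s where "is_arg_min F (\<lambda>x. x \<in> S) s" using ex_is_arg_min_if_finite[OF assms] by blast
  then show ?thesis unfolding is_arg_min_def using that by (meson not_le)
qed

lemma corr_bound:
  fixes P :: "'a \<Rightarrow> 'a" and Q :: "'b \<Rightarrow> 'a"
    and X :: "'a set" and dX :: "'a \<Rightarrow> 'a \<Rightarrow> real"
    and Y :: "'b set" and dY :: "'b \<Rightarrow> 'b \<Rightarrow> real"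
  assumes fin: "finite X" "finite Y" and ne: "X \<noteq> {}" "Y \<noteq> {}"
    and PX: "\<And>x x'. x\<in>X \<Longrightarrow> x'\<in>X \<Longrightarrow> \<bar>dX x x' - dX (P x) (P x')\<bar> \<le> a"
    and QY: "\<And>y y'. y\<in>Y \<Longrightarrow> y'\<in>Y \<Longrightarrow> \<bar>dY y y' - dX (Q y) (Q y')\<bar> \<le> b"
    and eq: "P ` X = Q ` Y"
  shows "dGH X dX Y dY \<le> (a + b) / 2"
proof -
  define f' where "f' = restrict (\<lambda>x. SOME y. y \<in> Y \<and> Q y = P x) X"
  define g' where "g' = restrict (\<lambda>y. SOME x. x \<in> X \<and> P x = Q y) Y"
  have f'p: "f' x \<in> Y \<and> Q (f' x) = P x" if "x \<in> X" for x
  proof -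
    have "\<exists>y. y \<in> Y \<and> Q y = P x" using eq that by (metis image_eqI imageE)
    then show ?thesis unfolding f'_def using that by (simp, metis (mono_tags, lifting) someI_ex)
  qed
  have g'p: "g' y \<in> X \<and> P (g' y) = Q y" if "y \<in> Y" for y
  proof -
    have "\<exists>x. x \<in> X \<and> P x = Q y" using eq that by (metis image_eqI imageE)
    then show ?thesis unfolding g'_def using that by (simp, metis (mono_tags, lifting) someI_ex)
  qed
  have f'E: "f' \<in> X \<rightarrow>\<^sub>E Y" unfolding f'_def using f'p f'_def by auto
  have g'E: "g' \<in> Y \<rightarrow>\<^sub>E X" unfolding g'_def using g'p g'_def by auto
  have d1: "dis X dX dY f' \<le> a + b"
    unfolding dis_def
  proof (rule cSUP_least)
    show "X \<times> X \<noteq> {}" using ne by auto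
  next
    fix p assume "p \<in> X \<times> X"
    then obtain x x' where p: "p = (x,x')" "x \<in> X" "x' \<in> X" by auto
    have "\<bar>dX x x' - dX (P x) (P x')\<bar> \<le> a" using PX p by auto
    moreover have "\<bar>dY (f' x) (f' x') - dX (Q (f' x)) (Q (f' x'))\<bar> \<le> b"
      using QY[of "f' x" "f' x'"] f'p[OF p(2)] f'p[OF p(3)] by blast
    ultimately show "\<bar>dX (fst p) (snd p) - dY (f' (fst p)) (f' (snd p))\<bar> \<le> a + b"
      using f'p p by auto
  qed
  have d2: "dis Y dY dX g' \<le> a + b"
    unfolding dis_def
  proof (rule cSUP_least)
    show "Y \<times> Y \<noteq> {}" using ne by auto
  next
    fix p assume "p \<in> Y \<times> Y"
    then obtain y y' where p: "p = (y,y')" "y \<in> Y" "y' \<in> Y" by auto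
    have "\<bar>dX (g' y) (g' y') - dX (P (g' y)) (P (g' y'))\<bar> \<le> a"
      using PX[of "g' y" "g' y'"] g'p[OF p(2)] g'p[OF p(3)] by blast
    moreover have "\<bar>dY y y' - dX (Q y) (Q y')\<bar> \<le> b"
      using QY p by auto
    ultimately show "\<bar>dY (fst p) (snd p) - dX (g' (fst p)) (g' (snd p))\<bar> \<le> a + b"
      using g'p p by auto
  qed
  have d3: "codis X dX Y dY f' g' \<le> a + b"
    unfolding codis_def
  proof (rule cSUP_least)
    show "X \<times> Y \<noteq> {}" using ne by auto
  next
    fix p assume "p \<in> X \<times> Y"
    then obtain x y where p: "p = (x,y)" "x \<in> X" "y \<in> Y" by auto
    have "\<bar>dX x (g' y) - dX (P x) (P (g' y))\<bar> \<le> a"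
      using PX[of x "g' y"] g'p[OF p(3)] p by blast
    moreover have "\<bar>dY (f' x) y - dX (Q (f' x)) (Q y)\<bar> \<le> b"
      using QY[of "f' x" y] f'p[OF p(2)] p by blast
    ultimately show "\<bar>dX (fst p) (g' (snd p)) - dY (f' (fst p)) (snd p)\<bar> \<le> a + b"
      using g'p f'p p by auto
  qed
  let ?S = "(X \<rightarrow>\<^sub>E Y) \<times> (Y \<rightarrow>\<^sub>E X)"
  let ?F = "\<lambda>fg. max (dis X dX dY (fst fg)) (max (dis Y dY dX (snd fg)) (codis X dX Y dY (fst fg) (snd fg)))"
  have finS: "finite ?S" using fin by (simp add: finite_PiE)
  have "(f', g') \<in> ?S" using f'E g'E by auto
  moreover have "bdd_below (?F ` ?S)" by (intro bdd_below_finite finite_imageI finS)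
  ultimately have "(INF fg \<in> ?S. ?F fg) \<le> ?F (f', g')"
    by (intro cINF_lower)
  also have "\<dots> \<le> a + b" using d1 d2 d3 by auto
  finally show ?thesis unfolding dGH_def by simp
qed


theorem theorem1:
  fixes n :: nat
    and X :: "'a set" and dX :: "'a \<Rightarrow> 'a \<Rightarrow> real"
    and Y :: "'b set" and dY :: "'b \<Rightarrow> 'b \<Rightarrow> real"
  assumes "0 < n"
    and "Metric_space X dX" and "Metric_space Y dY"
    and "finite X" and "finite Y" and "X \<noteq> {}" and "Y \<noteq> {}"
    and "card X \<le> n" and "card Y \<le> n"
  shows "mdGH X dX Y dY \<le> dGH X dX Y dY \<and> dGH X dX Y dY \<le> (2 * real n - 1) * mdGH X dX Y dY"
proof -
  note finX = \<open>finite X\<close> and finY = \<open>finite Y\<close> and neX = \<open>X \<noteq> {}\<close> and neY = \<open>Y \<noteq> {}\<close>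
  let ?SF = "X \<rightarrow>\<^sub>E Y" and ?SG = "Y \<rightarrow>\<^sub>E X"
  let ?S = "?SF \<times> ?SG"
  let ?F = "\<lambda>fg. max (dis X dX dY (fst fg)) (max (dis Y dY dX (snd fg)) (codis X dX Y dY (fst fg) (snd fg)))"
  have finSF: "finite ?SF" using finX finY by (simp add: finite_PiE)
  have finSG: "finite ?SG" using finX finY by (simp add: finite_PiE)
  have neSF: "?SF \<noteq> {}" using neY by (simp add: PiE_eq_empty_iff)
  have neSG: "?SG \<noteq> {}" using neX by (simp add: PiE_eq_empty_iff)
  have bF: "bdd_below ((\<lambda>f. dis X dX dY f) ` ?SF)" by (intro bdd_below_finite finite_imageI finSF)
  have bG: "bdd_below ((\<lambda>g. dis Y dY dX g) ` ?SG)" by (intro bdd_below_finite finite_imageI finSG)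
  define d where "d = max (INF f \<in> ?SF. dis X dX dY f) (INF g \<in> ?SG. dis Y dY dX g)"
  have md: "mdGH X dX Y dY = d / 2" unfolding mdGH_def d_def by simp
  have part1: "mdGH X dX Y dY \<le> dGH X dX Y dY"
  proof -
    have "d \<le> (INF fg \<in> ?S. ?F fg)"
    proof (rule cINF_greatest)
      show "?S \<noteq> {}" using neSF neSG by auto
    next
      fix fg assume fg: "fg \<in> ?S"
      have "(INF f \<in> ?SF. dis X dX dY f) \<le> dis X dX dY (fst fg)"
        using fg by (intro cINF_lower[OF bF]) auto
      moreover have "(INF g \<in> ?SG. dis Y dY dX g) \<le> dis Y dY dX (snd fg)"
        using fg by (intro cINF_lower[OF bG]) auto
      ultimately show "d \<le> ?F fg" unfolding d_def by auto
    qed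
    then show ?thesis unfolding md dGH_def by simp
  qed
  obtain f where fS: "f \<in> ?SF" and fmin: "\<And>t. t \<in> ?SF \<Longrightarrow> dis X dX dY f \<le> dis X dX dY t"
    using exists_min[OF finSF neSF] by blast
  obtain g where gS: "g \<in> ?SG" and gmin: "\<And>t. t \<in> ?SG \<Longrightarrow> dis Y dY dX g \<le> dis Y dY dX t"
    using exists_min[OF finSG neSG] by blast
  have fdle: "dis X dX dY f \<le> d"
    using cINF_greatest[OF neSF, of "dis X dX dY f" "\<lambda>f. dis X dX dY f"] fmin unfolding d_def by auto
  have gdle: "dis Y dY dX g \<le> d"
    using cINF_greatest[OF neSG, of "dis Y dY dX g" "\<lambda>g. dis Y dY dX g"] gmin unfolding d_def by auto
  have d0: "0 \<le> d" using dis_nonneg[OF finX neX, of dX dY f] fdle by linarith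
  have fY: "f x \<in> Y" if "x \<in> X" for x using fS that by auto
  have gX: "g y \<in> X" if "y \<in> Y" for y using gS that by auto
  have fd: "\<bar>dX x x' - dY (f x) (f x')\<bar> \<le> d" if "x \<in> X" "x' \<in> X" for x x'
    using dis_pointwise[OF finX that, of dX dY f] fdle by linarith
  have gd: "\<bar>dY y y' - dX (g y) (g y')\<bar> \<le> d" if "y \<in> Y" "y' \<in> Y" for y y'
    using dis_pointwise[OF finY that, of dY dX g] gdle by linarith
  define A where "A m = (g \<circ> f) ^^ m" for m
  define B where "B m y = A m (g y)" for m y
  have ASuc: "A (Suc m) x = B m (f x)" for m x
    unfolding A_def B_def funpow_Suc_right by simp
  have AX: "A m x \<in> X" if "x \<in> X" for m x
    using that by (induction m arbitrary: x) (auto simp: ASuc B_def fY gX, simp add: A_def)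
  have Ad: "\<bar>dX x x' - dX (A m x) (A m x')\<bar> \<le> 2 * real m * d" if "x \<in> X" "x' \<in> X" for m x x'
    using that
  proof (induction m arbitrary: x x')
    case 0
    then show ?case by (simp add: A_def)
  next
    case (Suc m)
    have "\<bar>dX (g (f x)) (g (f x')) - dX (A m (g (f x))) (A m (g (f x')))\<bar> \<le> 2 * real m * d"
      using Suc gX fY by auto
    moreover have "\<bar>dX x x' - dY (f x) (f x')\<bar> \<le> d" using fd Suc by auto
    moreover have "\<bar>dY (f x) (f x') - dX (g (f x)) (g (f x'))\<bar> \<le> d" using gd Suc fY by auto
    ultimately show ?case unfolding ASuc B_def by (simp add: algebra_simps abs_le_iff)
  qed
  have Bd: "\<bar>dY y y' - dX (B m y) (B m y')\<bar> \<le> (2 * real m + 1) * d" if "y \<in> Y" "y' \<in> Y" for m y y'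
  proof -
    have "\<bar>dX (g y) (g y') - dX (A m (g y)) (A m (g y'))\<bar> \<le> 2 * real m * d"
      using Ad gX that by auto
    moreover have "\<bar>dY y y' - dX (g y) (g y')\<bar> \<le> d" using gd that by auto
    ultimately show ?thesis unfolding B_def by (simp add: algebra_simps)
  qed
  define S where "S i = (if even i then A (i div 2) ` X else B (i div 2) ` Y)" for i
  have Smono: "S (Suc i) \<subseteq> S i" for i
  proof (cases "even i")
    case True
    then have "S (Suc i) = B (i div 2) ` Y" "S i = A (i div 2) ` X" unfolding S_def by auto
    then show ?thesis unfolding B_def using gX by auto
  next
    case False
    then have "Suc i div 2 = Suc (i div 2)" by presburger
    then have "S (Suc i) = A (Suc (i div 2)) ` X" "S i = B (i div 2) ` Y" using False unfolding S_def by auto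
    then show ?thesis unfolding ASuc using fY by auto
  qed
  have Sfin: "finite (S i)" for i unfolding S_def using finX finY by auto
  have Sne: "S i \<noteq> {}" for i unfolding S_def using neX neY by auto
  have "\<exists>i<n. S (Suc i) = S i"
  proof (rule ccontr)
    assume "\<not> ?thesis"
    then have strict: "card (S (Suc i)) < card (S i)" if "i < n" for i
      using that Smono Sfin by (meson psubsetI psubset_card_mono)
    have "card (S i) + i \<le> n" if "i \<le> n" for i
      using that
    proof (induction i)
      case 0
      then show ?case using \<open>card X \<le> n\<close> by (simp add: S_def A_def)
    next
      case (Suc i)
      then show ?case using strict[of i] by simp
    qed
    then have "card (S n) = 0" by fastforce
    then show False using Sfin Sne by auto
  qed
  then obtain i where ilt: "i < n" and Si: "S (Suc i) = S i" by blast
  have "dGH X dX Y dY \<le> (2 * real i + 1) * d / 2"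
  proof (cases "even i")
    case True
    define m where "m = i div 2"
    have im: "i = 2 * m" using True m_def by simp
    have eq: "A m ` X = B m ` Y" using Si True unfolding S_def m_def by auto
    have "dGH X dX Y dY \<le> (2 * real m * d + (2 * real m + 1) * d) / 2"
      by (rule corr_bound[OF finX finY neX neY _ _ eq]) (use Ad Bd in auto)
    then show ?thesis unfolding im by (simp add: algebra_simps)
  next
    case False
    define m where "m = i div 2"
    have im: "i = 2 * m + 1" using False m_def by presburger
    have "Suc i div 2 = Suc m" using im by simp
    then have eq: "A (Suc m) ` X = B m ` Y" using Si False unfolding S_def m_def by auto
    have "dGH X dX Y dY \<le> (2 * real (Suc m) * d + (2 * real m + 1) * d) / 2"
      by (rule corr_bound[OF finX finY neX neY _ _ eq]) (use Ad[of _ _ "Suc m"] Bd in auto)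
    then show ?thesis unfolding im by (simp add: algebra_simps)
  qed
  also have "\<dots> \<le> (2 * real n - 1) * d / 2"
  proof -
    have "2 * real i + 1 \<le> 2 * real n - 1" using ilt by linarith
    then show ?thesis using d0 by (intro divide_right_mono mult_right_mono) auto
  qed
  finally have "dGH X dX Y dY \<le> (2 * real n - 1) * mdGH X dX Y dY" unfolding md by simp
  with part1 show ?thesis by blast
qed

end
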